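(* Let $R$ be a set, $\mathcal{G}:(\mathbf{1},R)\rightarrow(Y,R)$ an object of $\mathrm{2Open}_R$, and $\mathcal{G}_\omega$ its $\omega$-iteration. Then $\mathcal{G}_\omega$, with coalgebra map $(\langle\mathrm{now},\mathrm{ltr}\rangle,\langle\mathrm{hd},\mathrm{tl}\rangle):\mathcal{G}_\omega\rightarrow F_\mathcal{G}\mathcal{G}_\omega$, is a final $F_\mathcal{G}$-coalgebra: for every $F_\mathcal{G}$-coalgebra $\gamma:\mathcal{H}\rightarrow F_\mathcal{G}\mathcal{H}$ there is a unique morphism $\beta:\mathcal{H}\rightarrow\mathcal{G}_\omega$ in $\mathrm{2Open}_R$ with $(\langle\mathrm{now},\mathrm{ltr}\rangle,\langle\mathrm{hd},\mathrm{tl}\rangle)\circ\beta=F_\mathcal{G}(\beta)\circ\gamma$.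
   Context: Fix a set $R$. Objects of $\mathrm{2Open}_R$ are open games $\mathcal{H}:(\mathbf{1},R)\rightarrow(Y_\mathcal{H},R)$ given by a strategy set $\Sigma_\mathcal{H}$, a move set $Y_\mathcal{H}$, a play function $P_\mathcal{H}:\Sigma_\mathcal{H}\rightarrow Y_\mathcal{H}$, an equilibrium function $E_\mathcal{H}:(Y_\mathcal{H}\rightarrow R)\rightarrow\mathcal{P}\Sigma_\mathcal{H}$, and identity coutility $C\,\sigma\,r=r$. A morphism $\beta:\mathcal{H}\rightarrow\mathcal{H}'$ is a pair $\beta_Y:Y_\mathcal{H}\rightarrow Y_{\mathcal{H}'}$, $\beta_\Sigma:\Sigma_\mathcal{H}\rightarrow\Sigma_{\mathcal{H}'}$ with $\beta_Y(P_\mathcal{H}\sigma)=P_{\mathcal{H}'}(\beta_\Sigma\sigma)$ for all $\sigma$, and such that for all $\sigma\in\Sigma_\mathcal{H}$ and $k:Y_{\mathcal{H}'}\rightarrow R$, $\sigma\in E_\mathcal{H}(k\circ\beta_Y)$ implies $\beta_\Sigma(\sigma)\in E_{\mathcal{H}'}(k)$; composition is componentwise. For the fixed $\mathcal{G}$ (data $\Sigma_\mathcal{G},Y,P_\mathcal{G},E_\mathcal{G}$), the functor $F_\mathcal{G}:\mathrm{2Open}_R\rightarrow\mathrm{2Open}_R$ sends $\mathcal{H}$ to the composite game $(Y\rightarrow\mathcal{H})\circ\mathcal{G}$, explicitly: strategies $\Sigma_\mathcal{G}\times(Y\rightarrow\Sigma_\mathcal{H})$, moves $Y\times Y_\mathcal{H}$,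 play $P(\sigma,f)=(P_\mathcal{G}\sigma,P_\mathcal{H}(f(P_\mathcal{G}\sigma)))$, identity coutility, and $(\sigma,f)\in E_{F_\mathcal{G}\mathcal{H}}(k)$ iff $\sigma\in E_\mathcal{G}(\lambda y.\,k(y,P_\mathcal{H}(f\,y)))$ and $f(y')\in E_\mathcal{H}(\lambda z.\,k(y',z))$ for all $y'\in Y$; on a morphism $\beta$, $(F_\mathcal{G}\beta)_\Sigma(\sigma,f)=(\sigma,\beta_\Sigma\circ f)$ and $(F_\mathcal{G}\beta)_Y(y,z)=(y,\beta_Y z)$. An $F_\mathcal{G}$-coalgebra is an object $\mathcal{H}$ with a morphism $\gamma:\mathcal{H}\rightarrow F_\mathcal{G}\mathcal{H}$. Notation: $Y^*$ finite words over $Y$, $\epsilon$ the empty word, $Y^\omega$ infinite streams over $Y$, $y\mathrel{::}w$ prepending, $\mathrm{hd}(y_0y_1\dots)=y_0$, $\mathrm{tl}(y_0y_1y_2\dots)=y_1y_2\dots$. For $\sigma:Y^*\rightarrow\Sigma_\mathcal{G}$, $\sigma_0=\mathrm{now}(\sigma)=\sigma(\epsilon)$ and $\sigma'=\mathrm{ltr}(\sigma)=\lambda y.\lambda w.\,\sigma(yw)$. The $\omega$-iteration $\mathcal{G}_\omega:(\mathbf{1},R)\rightarrow(Y^\omega,R)$ has strategies $\Sigma_\omega=Y^*\rightarrow\Sigma_\mathcal{G}$, moves $Y^\omega$, identity coutility, play function $P_\omega$ the unique function with $P_\omega\sigma=P_\mathcal{G}\sigma_0\mathrel{::}P_\omega(\lambda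 z.\,\sigma(P_\mathcal{G}\sigma_0\mathrel{::}z))$, and equilibrium function $E_\omega$ the greatest fixed point of the monotone operator $\Phi$ on $(\mathcal{P}\Sigma_\omega)^{(Y^\omega\rightarrow R)}$ (ordered pointwise by inclusion) given by: $\sigma\in\Phi(\Gamma)(k)$ iff $\sigma_0\in E_\mathcal{G}(\lambda y.\,k(y\mathrel{::}P_\omega(\sigma'y)))$ and for all $y'\in Y$, $\sigma'y'\in\Gamma(\lambda z.\,k(y'\mathrel{::}z))$. *)

theory Defs
  imports Main "HOL-Library.Stream"
begin

text \<open>An object of 2Open_R: a game (1,R) -> (Y,R) with identity coutility.
  The strategy set and move set are the types 's and 'y, the outcome set R is 'r.\<close>
record ('s, 'y, 'r) ogame =
  play  :: "'s \<Rightarrow> 'y"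
  equil :: "('y \<Rightarrow> 'r) \<Rightarrow> 's set"

definition is_morph ::
  "('s, 'y, 'r) ogame \<Rightarrow> ('s2, 'y2, 'r) ogame \<Rightarrow> ('y \<Rightarrow> 'y2) \<Rightarrow> ('s \<Rightarrow> 's2) \<Rightarrow> bool" where
  "is_morph H H' bY bS \<longleftrightarrow>
     (\<forall>\<sigma>. bY (play H \<sigma>) = play H' (bS \<sigma>)) \<and>
     (\<forall>\<sigma> k. \<sigma> \<in> equil H (k \<circ> bY) \<longrightarrow> bS \<sigma> \<in> equil H' k)"

text \<open>The functor F_G on objects: the composite game (Y -> H) o G.\<close>
definition Fobj ::
  "('gs, 'y, 'r) ogame \<Rightarrow> ('hs, 'hy, 'r) ogame \<Rightarrow> ('gs \<times> ('y \<Rightarrow> 'hs), 'y \<times> 'hy, 'r) ogame" where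
  "Fobj G H = \<lparr> play = (\<lambda>(\<sigma>, f). (play G \<sigma>, play H (f (play G \<sigma>)))),
                equil = (\<lambda>k. {(\<sigma>, f). \<sigma> \<in> equil G (\<lambda>y. k (y, play H (f y))) \<and>
                                     (\<forall>y'. f y' \<in> equil H (\<lambda>z. k (y', z)))}) \<rparr>"

definition FmorY :: "('hy \<Rightarrow> 'hy2) \<Rightarrow> ('y \<times> 'hy \<Rightarrow> 'y \<times> 'hy2)" where
  "FmorY bY = (\<lambda>(y, z). (y, bY z))"

definition FmorS :: "('hs \<Rightarrow> 'hs2) \<Rightarrow> ('gs \<times> ('y \<Rightarrow> 'hs) \<Rightarrow> 'gs \<times> ('y \<Rightarrow> 'hs2))" where
  "FmorS bS = (\<lambda>(\<sigma>, f). (\<sigma>, bS \<circ> f))"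

primcorec omega_play :: "('s, 'y, 'r) ogame \<Rightarrow> ('y list \<Rightarrow> 's) \<Rightarrow> 'y stream" where
  "shd (omega_play G \<sigma>) = play G (\<sigma> [])"
| "stl (omega_play G \<sigma>) = omega_play G (\<lambda>z. \<sigma> (play G (\<sigma> []) # z))"

definition omega_Phi ::
  "('s, 'y, 'r) ogame \<Rightarrow> (('y stream \<Rightarrow> 'r) \<Rightarrow> ('y list \<Rightarrow> 's) set)
     \<Rightarrow> (('y stream \<Rightarrow> 'r) \<Rightarrow> ('y list \<Rightarrow> 's) set)" where
  "omega_Phi G \<Gamma> = (\<lambda>k. {\<sigma>. \<sigma> [] \<in> equil G (\<lambda>y. k (y ## omega_play G (\<lambda>w. \<sigma> (y # w)))) \<and>
                          (\<forall>y'. (\<lambda>w. \<sigma> (y' # w)) \<in> \<Gamma> (\<lambda>z. k (y' ## z)))})"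

definition omega_equil :: "('s, 'y, 'r) ogame \<Rightarrow> ('y stream \<Rightarrow> 'r) \<Rightarrow> ('y list \<Rightarrow> 's) set" where
  "omega_equil G = gfp (omega_Phi G)"

definition omega :: "('s, 'y, 'r) ogame \<Rightarrow> ('y list \<Rightarrow> 's, 'y stream, 'r) ogame" where
  "omega G = \<lparr> play = omega_play G, equil = omega_equil G \<rparr>"

definition now :: "('y list \<Rightarrow> 's) \<Rightarrow> 's" where "now \<sigma> = \<sigma> []"
definition ltr :: "('y list \<Rightarrow> 's) \<Rightarrow> 'y \<Rightarrow> 'y list \<Rightarrow> 's" where "ltr \<sigma> = (\<lambda>y w. \<sigma> (y # w))"

end

theory Submission
  imports Defs
begin

primcorec bY :: "('hy \<Rightarrow> 'y \<times> 'hy) \<Rightarrow> 'hy \<Rightarrow> 'y stream" where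
  "shd (bY g z) = fst (g z)"
| "stl (bY g z) = bY g (snd (g z))"

primrec bS :: "('hs \<Rightarrow> 'gs \<times> ('y \<Rightarrow> 'hs)) \<Rightarrow> 'y list \<Rightarrow> 'hs \<Rightarrow> 'gs" where
  "bS g [] \<sigma> = fst (g \<sigma>)"
| "bS g (y # w) \<sigma> = bS g w (snd (g \<sigma>) y)"

lemma mono_Phi: "mono (omega_Phi G)"
  unfolding mono_def le_fun_def omega_Phi_def by blast

lemma omega_equil_unfold: "omega_equil G = omega_Phi G (omega_equil G)"
  unfolding omega_equil_def using gfp_unfold[OF mono_Phi] .

lemma part1:
  "is_morph (omega G) (Fobj G (omega G)) (\<lambda>s. (shd s, stl s)) (\<lambda>\<sigma>. (now \<sigma>, ltr \<sigma>))"
proof -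
  show ?thesis
    unfolding is_morph_def
  proof (intro conjI allI impI)
    fix \<sigma>
    show "(shd (play (omega G) \<sigma>), stl (play (omega G) \<sigma>)) = play (Fobj G (omega G)) (now \<sigma>, ltr \<sigma>)"
      by (simp add: omega_def Fobj_def now_def ltr_def)
  next
    fix \<sigma> k
    assume "\<sigma> \<in> equil (omega G) (k \<circ> (\<lambda>s. (shd s, stl s)))"
    then have "\<sigma> \<in> omega_Phi G (omega_equil G) (k \<circ> (\<lambda>s. (shd s, stl s)))"
      using omega_equil_unfold[of G] by (simp add: omega_def)
    then show "(now \<sigma>, ltr \<sigma>) \<in> equil (Fobj G (omega G)) k"
      by (simp add: omega_Phi_def omega_def Fobj_def now_def ltr_def)
  qed
qed

lemma bY_play:
  assumes m: "is_morph H (Fobj G H) \<gamma>Y \<gamma>S"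
  shows "bY \<gamma>Y (play H \<sigma>) = omega_play G (\<lambda>w. bS \<gamma>S w \<sigma>)"
proof -
  have pm: "\<And>\<sigma>. \<gamma>Y (play H \<sigma>) = play (Fobj G H) (\<gamma>S \<sigma>)"
    using m unfolding is_morph_def by blast
  show ?thesis
  proof (coinduction arbitrary: \<sigma> rule: stream.coinduct)
    case (Eq_stream \<sigma>)
    obtain s0 f where g: "\<gamma>S \<sigma> = (s0, f)" by (cases "\<gamma>S \<sigma>")
    have "\<gamma>Y (play H \<sigma>) = (play G s0, play H (f (play G s0)))"
      using pm[of \<sigma>] g by (simp add: Fobj_def)
    then show ?case using g
      by (auto intro!: exI[of _ "f (play G s0)"])
  qed
qed

lemma part2_equil:
  assumes m: "is_morph H (Fobj G H) \<gamma>Y \<gamma>S"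
  shows "\<sigma> \<in> equil H (k \<circ> bY \<gamma>Y) \<Longrightarrow> (\<lambda>w. bS \<gamma>S w \<sigma>) \<in> omega_equil G k"
proof -
  define S where "S = (\<lambda>k. {(\<lambda>w. bS \<gamma>S w \<sigma>) |\<sigma>. \<sigma> \<in> equil H (k \<circ> bY \<gamma>Y)})"
  have em: "\<And>\<sigma> k. \<sigma> \<in> equil H (k \<circ> \<gamma>Y) \<Longrightarrow> \<gamma>S \<sigma> \<in> equil (Fobj G H) k"
    using m unfolding is_morph_def by blast
  have "S \<le> omega_Phi G S"
  proof (rule le_funI, rule subsetI)
    fix k t assume "t \<in> S k"
    then obtain \<sigma> where t: "t = (\<lambda>w. bS \<gamma>S w \<sigma>)" and h: "\<sigma> \<in> equil H (k \<circ> bY \<gamma>Y)"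
      by (auto simp: S_def)
    obtain s0 f where g: "\<gamma>S \<sigma> = (s0, f)" by (cases "\<gamma>S \<sigma>")
    define k' where "k' = (\<lambda>(y, z). k (y ## bY \<gamma>Y z))"
    have "k' \<circ> \<gamma>Y = k \<circ> bY \<gamma>Y"
    proof
      fix z show "(k' \<circ> \<gamma>Y) z = (k \<circ> bY \<gamma>Y) z"
      proof (cases "\<gamma>Y z")
        case (Pair a b)
        have "bY \<gamma>Y z = a ## bY \<gamma>Y b"
          by (rule stream.expand) (simp add: Pair)
        then show ?thesis by (simp add: k'_def Pair)
      qed
    qed
    with h have "\<gamma>S \<sigma> \<in> equil (Fobj G H) k'" using em by metis
    then have A: "s0 \<in> equil G (\<lambda>y. k (y ## bY \<gamma>Y (play H (f y))))"
      and B: "\<And>y'. f y' \<in> equil H (\<lambda>z. k (y' ## bY \<gamma>Y z))"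
      using g by (auto simp: Fobj_def k'_def)
    have B': "\<And>y'. f y' \<in> equil H ((\<lambda>z. k (y' ## z)) \<circ> bY \<gamma>Y)"
      using B by (simp add: comp_def)
    show "t \<in> omega_Phi G S k"
      unfolding omega_Phi_def t using A B' g
      by (auto simp: S_def bY_play[OF m])
  qed
  then have "S \<le> omega_equil G" unfolding omega_equil_def by (rule gfp_upperbound)
  moreover assume "\<sigma> \<in> equil H (k \<circ> bY \<gamma>Y)"
  ultimately show ?thesis by (auto simp: S_def le_fun_def)
qed

theorem theorem16:
  fixes G :: "('s, 'y, 'r) ogame"
  shows "is_morph (omega G) (Fobj G (omega G)) (\<lambda>s. (shd s, stl s)) (\<lambda>\<sigma>. (now \<sigma>, ltr \<sigma>))
    \<and> (\<forall>(H :: ('hs, 'hy, 'r) ogame) \<gamma>Y \<gamma>S.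
         is_morph H (Fobj G H) \<gamma>Y \<gamma>S \<longrightarrow>
         (\<exists>!(\<beta>Y, \<beta>S). is_morph H (omega G) \<beta>Y \<beta>S \<and>
              (\<lambda>s. (shd s, stl s)) \<circ> \<beta>Y = FmorY \<beta>Y \<circ> \<gamma>Y \<and>
              (\<lambda>\<sigma>. (now \<sigma>, ltr \<sigma>)) \<circ> \<beta>S = FmorS \<beta>S \<circ> \<gamma>S))"
proof (intro conjI allI impI)
  show "is_morph (omega G) (Fobj G (omega G)) (\<lambda>s. (shd s, stl s)) (\<lambda>\<sigma>. (now \<sigma>, ltr \<sigma>))"
    by (rule part1)
next
  fix H :: "('hs, 'hy, 'r) ogame" and \<gamma>Y \<gamma>S
  assume m: "is_morph H (Fobj G H) \<gamma>Y \<gamma>S"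
  let ?BY = "bY \<gamma>Y" and ?BS = "\<lambda>\<sigma> w. bS \<gamma>S w \<sigma>"
  show "\<exists>!(\<beta>Y, \<beta>S). is_morph H (omega G) \<beta>Y \<beta>S \<and>
              (\<lambda>s. (shd s, stl s)) \<circ> \<beta>Y = FmorY \<beta>Y \<circ> \<gamma>Y \<and>
              (\<lambda>\<sigma>. (now \<sigma>, ltr \<sigma>)) \<circ> \<beta>S = FmorS \<beta>S \<circ> \<gamma>S"
  proof (rule ex1I[of _ "(?BY, ?BS)"])
    have "is_morph H (omega G) ?BY ?BS"
      unfolding is_morph_def using bY_play[OF m] part2_equil[OF m]
      by (simp add: omega_def)
    moreover have "(\<lambda>s. (shd s, stl s)) \<circ> ?BY = FmorY ?BY \<circ> \<gamma>Y"
    proof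
      fix z show "((\<lambda>s. (shd s, stl s)) \<circ> ?BY) z = (FmorY ?BY \<circ> \<gamma>Y) z"
        by (cases "\<gamma>Y z") (simp add: FmorY_def)
    qed
    moreover have "(\<lambda>\<sigma>. (now \<sigma>, ltr \<sigma>)) \<circ> ?BS = FmorS ?BS \<circ> \<gamma>S"
    proof
      fix \<sigma> show "((\<lambda>\<sigma>. (now \<sigma>, ltr \<sigma>)) \<circ> ?BS) \<sigma> = (FmorS ?BS \<circ> \<gamma>S) \<sigma>"
        by (cases "\<gamma>S \<sigma>") (simp add: FmorS_def now_def ltr_def comp_def)
    qed
    ultimately show "case (?BY, ?BS) of (\<beta>Y, \<beta>S) \<Rightarrow> is_morph H (omega G) \<beta>Y \<beta>S \<and>
              (\<lambda>s. (shd s, stl s)) \<circ> \<beta>Y = FmorY \<beta>Y \<circ> \<gamma>Y \<and>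
              (\<lambda>\<sigma>. (now \<sigma>, ltr \<sigma>)) \<circ> \<beta>S = FmorS \<beta>S \<circ> \<gamma>S" by simp
  next
    fix p
    assume "case p of (\<beta>Y, \<beta>S) \<Rightarrow> is_morph H (omega G) \<beta>Y \<beta>S \<and>
              (\<lambda>s. (shd s, stl s)) \<circ> \<beta>Y = FmorY \<beta>Y \<circ> \<gamma>Y \<and>
              (\<lambda>\<sigma>. (now \<sigma>, ltr \<sigma>)) \<circ> \<beta>S = FmorS \<beta>S \<circ> \<gamma>S"
    then obtain \<beta>Y \<beta>S where p: "p = (\<beta>Y, \<beta>S)"
      and eY: "(\<lambda>s. (shd s, stl s)) \<circ> \<beta>Y = FmorY \<beta>Y \<circ> \<gamma>Y"
      and eS: "(\<lambda>\<sigma>. (now \<sigma>, ltr \<sigma>)) \<circ> \<beta>S = FmorS \<beta>S \<circ> \<gamma>S"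
      by (cases p) auto
    have eY': "\<And>z. shd (\<beta>Y z) = fst (\<gamma>Y z) \<and> stl (\<beta>Y z) = \<beta>Y (snd (\<gamma>Y z))"
    proof -
      fix z
      have "(shd (\<beta>Y z), stl (\<beta>Y z)) = FmorY \<beta>Y (\<gamma>Y z)" using fun_cong[OF eY, of z] by simp
      then show "shd (\<beta>Y z) = fst (\<gamma>Y z) \<and> stl (\<beta>Y z) = \<beta>Y (snd (\<gamma>Y z))"
        by (cases "\<gamma>Y z") (simp add: FmorY_def)
    qed
    have eS': "\<And>\<sigma>. \<beta>S \<sigma> [] = fst (\<gamma>S \<sigma>) \<and> (\<forall>y w. \<beta>S \<sigma> (y # w) = \<beta>S (snd (\<gamma>S \<sigma>) y) w)"
    proof -
      fix \<sigma>
      have "(now (\<beta>S \<sigma>), ltr (\<beta>S \<sigma>)) = FmorS \<beta>S (\<gamma>S \<sigma>)" using fun_cong[OF eS, of \<sigma>] by simp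
      then show "\<beta>S \<sigma> [] = fst (\<gamma>S \<sigma>) \<and> (\<forall>y w. \<beta>S \<sigma> (y # w) = \<beta>S (snd (\<gamma>S \<sigma>) y) w)"
        by (cases "\<gamma>S \<sigma>") (auto simp: FmorS_def now_def ltr_def fun_eq_iff)
    qed
    have "\<beta>Y z = bY \<gamma>Y z" for z
      by (coinduction arbitrary: z rule: stream.coinduct) (auto simp: eY')
    moreover have "\<beta>S \<sigma> w = bS \<gamma>S w \<sigma>" for \<sigma> w
      by (induction w arbitrary: \<sigma>) (auto simp: eS')
    ultimately show "p = (?BY, ?BS)" using p by (auto simp: fun_eq_iff)
  qed
qed

end
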